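(* Let $R=k[x_1,\dots,x_n]$ be graded by a monoid $P$ as described in the context, let $G$ act on $R$ by permuting the variables, let $\preceq$ be a monomial order, and let $I\subset R$ be a $P$-homogeneous ideal such that $\mathrm{in}_{\preceq}(I)$ is generated in (standard) degrees $\le d$. If $G$ acts monomially on $I$ up to degree $d$ and the action is $P$-compatible, then the Hilbert series of $I$ is $G$-invariant: $g(HS(I,t))=HS(I,t)$ for all $g\in G$.
   Context: $R$ is graded by a monoid $P$ such that every monomial is $P$-homogeneous and the $P$-grading refines the standard grading (each $P$-graded piece is finite dimensional). $HS(I,t)=\sum_{D\in P}\dim_k(I_D)\,t^D$. The action of $G$ is $P$-compatible if for every $g\in G$ the map $\hat g:P\to P$, $\hat g(D)=\deg(g(m))$ for any monomial $m$ with $\deg(m)=D$, is a well-defined endomorphism of $P$; then $G$ acts on power series by $g(\sum_D a_Dt^D)=\sum_D a_Dt^{\hat g(D)}$. For $h\in R$, $\mathrm{mon}(h)$ is the set of monomials of $h$ with nonzero coefficient; $G$ acts monomially on $I$ up to degree $d$ if for every $h\in I$ of standard degree $\le d$ and every $g\in G$ there is $h'\in I$ with $\mathrm{mon}(h')=\mathrm{mon}(g(h))$. *)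

theory Defs
  imports "HOL-Library.Poly_Mapping" "HOL.Vector_Spaces"
begin

text \<open>Polynomial ring R = k[x_v : v in 'v] (finitely many variables, 'v finite):
  monomials are exponent vectors (finitely supported v -> nat), polynomials are finitely
  supported coefficient functions on monomials.\<close>

type_synonym 'v mon = "'v \<Rightarrow>\<^sub>0 nat"
type_synonym ('v, 'k) mpoly = "'v mon \<Rightarrow>\<^sub>0 'k"

definition kscale :: "'k::field \<Rightarrow> ('v, 'k) mpoly \<Rightarrow> ('v, 'k) mpoly" where
  "kscale c p = Poly_Mapping.map (\<lambda>x. c * x) p"

definition tdeg :: "'v mon \<Rightarrow> nat" where
  "tdeg m = (\<Sum>v\<in>Poly_Mapping.keys m. Poly_Mapping.lookup m v)"

definition std_deg :: "('v, 'k::zero) mpoly \<Rightarrow> nat" where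
  "std_deg h = Max (insert 0 (tdeg ` Poly_Mapping.keys h))"

text \<open>permutation g of the variables acting on monomials and polynomials: x_v \<mapsto> x_(g v)\<close>
definition act_mon :: "('v \<Rightarrow> 'v) \<Rightarrow> 'v mon \<Rightarrow> 'v mon" where
  "act_mon g m = Poly_Mapping.map_key (inv g) m"

definition act_poly :: "('v \<Rightarrow> 'v) \<Rightarrow> ('v, 'k::zero) mpoly \<Rightarrow> ('v, 'k) mpoly" where
  "act_poly g f = Poly_Mapping.map_key (act_mon (inv g)) f"

definition perm_group :: "('v \<Rightarrow> 'v) set \<Rightarrow> bool" where
  "perm_group G \<longleftrightarrow> (\<forall>g\<in>G. bij g) \<and> id \<in> G \<and> (\<forall>g\<in>G. \<forall>h\<in>G. g \<circ> h \<in> G)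
     \<and> (\<forall>g\<in>G. inv g \<in> G)"

definition monomial_order :: "('v mon \<Rightarrow> 'v mon \<Rightarrow> bool) \<Rightarrow> bool" where
  "monomial_order le \<longleftrightarrow>
     (\<forall>a. le a a) \<and> (\<forall>a b. le a b \<longrightarrow> le b a \<longrightarrow> a = b)
     \<and> (\<forall>a b c. le a b \<longrightarrow> le b c \<longrightarrow> le a c) \<and> (\<forall>a b. le a b \<or> le b a)
     \<and> (\<forall>a b c. le a b \<longrightarrow> le (a + c) (b + c))
     \<and> wf {(a, b). le a b \<and> a \<noteq> b}"

definition lead_mon :: "('v mon \<Rightarrow> 'v mon \<Rightarrow> bool) \<Rightarrow> ('v, 'k::zero) mpoly \<Rightarrow> 'v mon" where
  "lead_mon le f = (THE m. m \<in> Poly_Mapping.keys f \<and> (\<forall>m'\<in>Poly_Mapping.keys f. le m' m))"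

definition init_ideal :: "('v mon \<Rightarrow> 'v mon \<Rightarrow> bool) \<Rightarrow> ('v, 'k::field) mpoly set
    \<Rightarrow> ('v, 'k) mpoly set" where
  "init_ideal le I = module.span ((*) :: ('v, 'k) mpoly \<Rightarrow> _ \<Rightarrow> _)
     {Poly_Mapping.single (lead_mon le f) 1 | f. f \<in> I \<and> f \<noteq> 0}"

abbreviation is_ideal :: "('v, 'k::field) mpoly set \<Rightarrow> bool" where
  "is_ideal I \<equiv> module.subspace ((*) :: ('v, 'k) mpoly \<Rightarrow> _ \<Rightarrow> _) I"

abbreviation ideal_gen :: "('v, 'k::field) mpoly set \<Rightarrow> ('v, 'k) mpoly set" where
  "ideal_gen S \<equiv> module.span ((*) :: ('v, 'k) mpoly \<Rightarrow> _ \<Rightarrow> _) S"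

definition P_grading :: "('v mon \<Rightarrow> 'p::monoid_add) \<Rightarrow> bool" where
  "P_grading deg \<longleftrightarrow> deg 0 = 0 \<and> (\<forall>a b. deg (a + b) = deg a + deg b)"

definition P_homogeneous :: "('v mon \<Rightarrow> 'p) \<Rightarrow> ('v, 'k::zero) mpoly \<Rightarrow> bool" where
  "P_homogeneous deg f \<longleftrightarrow> (\<exists>D. \<forall>m\<in>Poly_Mapping.keys f. deg m = D)"

definition std_homogeneous_le :: "nat \<Rightarrow> ('v, 'k::zero) mpoly \<Rightarrow> bool" where
  "std_homogeneous_le d f \<longleftrightarrow> (\<exists>e\<le>d. \<forall>m\<in>Poly_Mapping.keys f. tdeg m = e)"

definition piece :: "('v mon \<Rightarrow> 'p) \<Rightarrow> ('v, 'k::zero) mpoly set \<Rightarrow> 'p \<Rightarrow> ('v, 'k) mpoly set" where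
  "piece deg I D = {f \<in> I. \<forall>m\<in>Poly_Mapping.keys f. deg m = D}"

text \<open>Hilbert series, as its coefficient function D \<mapsto> dim_k I_D\<close>
definition hilbert_series :: "('v mon \<Rightarrow> 'p) \<Rightarrow> ('v, 'k::field) mpoly set \<Rightarrow> 'p \<Rightarrow> nat" where
  "hilbert_series deg I D = vector_space.dim kscale (piece deg I D)"

definition monoid_endo :: "('p::monoid_add \<Rightarrow> 'p) \<Rightarrow> bool" where
  "monoid_endo \<phi> \<longleftrightarrow> \<phi> 0 = 0 \<and> (\<forall>a b. \<phi> (a + b) = \<phi> a + \<phi> b)"

definition induced_endo :: "('v mon \<Rightarrow> 'p::monoid_add) \<Rightarrow> ('v \<Rightarrow> 'v) \<Rightarrow> ('p \<Rightarrow> 'p) \<Rightarrow> bool" where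
  "induced_endo deg g \<phi> \<longleftrightarrow> monoid_endo \<phi> \<and> (\<forall>m. deg (act_mon g m) = \<phi> (deg m))"

definition P_compatible :: "('v mon \<Rightarrow> 'p::monoid_add) \<Rightarrow> ('v \<Rightarrow> 'v) set \<Rightarrow> bool" where
  "P_compatible deg G \<longleftrightarrow> (\<forall>g\<in>G. \<exists>\<phi>. induced_endo deg g \<phi>)"

text \<open>action on power series: g(\<Sum> a_D t^D) = \<Sum> a_D t^(\<phi> D); coefficient of t^E\<close>
definition ps_act :: "('p \<Rightarrow> 'p) \<Rightarrow> ('p \<Rightarrow> nat) \<Rightarrow> 'p \<Rightarrow> nat" where
  "ps_act \<phi> F E = (\<Sum>D\<in>{D. F D \<noteq> 0 \<and> \<phi> D = E}. F D)"

definition acts_monomially_upto :: "('v \<Rightarrow> 'v) set \<Rightarrow> ('v, 'k::zero) mpoly set \<Rightarrow> nat \<Rightarrow> bool" where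
  "acts_monomially_upto G I d \<longleftrightarrow>
     (\<forall>h\<in>I. std_deg h \<le> d \<longrightarrow> (\<forall>g\<in>G. \<exists>h'\<in>I. Poly_Mapping.keys h' = Poly_Mapping.keys (act_poly g h)))"

end

theory Submission
  imports Defs
begin


lemma lookup_kscale[simp]: "Poly_Mapping.lookup (kscale c p) k = c * Poly_Mapping.lookup p k"
  by (simp add: kscale_def Poly_Mapping.map.rep_eq when_def)

lemma kscale_mult: "kscale c p = Poly_Mapping.single 0 c * p"
  by (simp add: kscale_def mult_map_scale_conv_mult)

interpretation K: vector_space "kscale :: 'k::field \<Rightarrow> ('v,'k) mpoly \<Rightarrow> _"
  by unfold_locales (simp_all add: kscale_mult distrib_left distrib_right single_add mult_single
       flip: mult.assoc)

interpretation R: module "(*) :: ('v,'k::field) mpoly \<Rightarrow> _"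
  by unfold_locales (simp_all add: distrib_left distrib_right mult.assoc)

lemma lookup_single_mult:
  fixes p :: "('v, 'k::field) mpoly"
  shows "Poly_Mapping.lookup (Poly_Mapping.single a x * p) (a + k) = x * Poly_Mapping.lookup p k"
proof -
  have "Poly_Mapping.lookup (Poly_Mapping.single a x * p) (a + k)
     = (\<Sum>l. (x when a = l) * (\<Sum>q. Poly_Mapping.lookup p q when a + k = l + q))"
    by (simp add: lookup_mult lookup_single)
  also have "\<dots> = (\<Sum>l. (x * (\<Sum>q. Poly_Mapping.lookup p q when a + k = l + q)) when a = l)"
    by (simp add: when_mult)
  also have "\<dots> = x * (\<Sum>q. Poly_Mapping.lookup p q when a + k = a + q)"
    by simp
  also have "\<dots> = x * (\<Sum>q. Poly_Mapping.lookup p q when k = q)"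
    by simp
  also have "\<dots> = x * Poly_Mapping.lookup p k" by simp
  finally show ?thesis .
qed

lemma lookup_single_mult_not:
  fixes p :: "('v, 'k::field) mpoly"
  assumes "\<And>k. b \<noteq> a + k" 
  shows "Poly_Mapping.lookup (Poly_Mapping.single a x * p) b = 0"
proof -
  have "Poly_Mapping.lookup (Poly_Mapping.single a x * p) b
     = (\<Sum>l. (x when a = l) * (\<Sum>q. Poly_Mapping.lookup p q when b = l + q))"
    by (simp add: lookup_mult lookup_single)
  also have "\<dots> = (\<Sum>l. (x * (\<Sum>q. Poly_Mapping.lookup p q when b = l + q)) when a = l)"
    by (simp add: when_mult)
  also have "\<dots> = x * (\<Sum>q. Poly_Mapping.lookup p q when b = a + q)"
    by simp
  also have "\<dots> = 0" using assms by simp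
  finally show ?thesis .
qed



lemma lookup_act_mon:
  assumes "bij g"
  shows "Poly_Mapping.lookup (act_mon g m) v = Poly_Mapping.lookup m (inv g v)"
proof -
  have "inj (inv g)" using assms bij_imp_bij_inv bij_is_inj by blast
  then show ?thesis unfolding act_mon_def by (simp add: map_key.rep_eq)
qed

lemma act_mon_inv_left:
  assumes "bij g" shows "act_mon (inv g) (act_mon g m) = m"
proof -
  have b: "bij (inv g)" using assms bij_imp_bij_inv by blast
  show ?thesis
    by (rule poly_mapping_eqI) (simp add: lookup_act_mon[OF b] lookup_act_mon[OF assms]
        inv_inv_eq[OF assms] bij_inv_eq_iff[OF assms] bij_is_inj[OF assms] bij_is_surj[OF assms] surj_f_inv_f)
qed

lemma act_mon_inv_right:
  assumes "bij g" shows "act_mon g (act_mon (inv g) m) = m"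
proof -
  have b: "bij (inv g)" using assms bij_imp_bij_inv by blast
  show ?thesis
    by (rule poly_mapping_eqI) (simp add: lookup_act_mon[OF b] lookup_act_mon[OF assms]
        inv_inv_eq[OF assms] bij_is_surj[OF assms] surj_f_inv_f)
qed

lemma act_mon_add:
  assumes "bij g" shows "act_mon g (a + b) = act_mon g a + act_mon g b"
  by (rule poly_mapping_eqI) (simp add: lookup_act_mon[OF assms] lookup_add)

lemma inj_act_mon: assumes "bij g" shows "inj (act_mon g)"
  by (metis act_mon_inv_left assms injI)

lemma keys_act_poly:
  assumes "bij g"
  shows "Poly_Mapping.keys (act_poly g f) = act_mon g ` Poly_Mapping.keys f"
proof -
  have b: "bij (inv g)" using assms bij_imp_bij_inv by blast
  have i: "inj (act_mon (inv g))" by (rule inj_act_mon[OF b])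
  have "Poly_Mapping.keys (act_poly g f) = act_mon (inv g) -` Poly_Mapping.keys f"
    unfolding act_poly_def using i by (simp add: keys_map_key)
  also have "\<dots> = act_mon g ` Poly_Mapping.keys f"
    using act_mon_inv_left[OF assms] act_mon_inv_right[OF assms]
    by (auto intro!: image_eqI[where x="act_mon (inv g) _"])
  finally show ?thesis .
qed

lemma tdeg_sum: "tdeg (m :: ('v::finite) mon) = (\<Sum>v\<in>UNIV. Poly_Mapping.lookup m v)"
  unfolding tdeg_def by (rule sum.mono_neutral_left) (auto simp: in_keys_iff)

lemma tdeg_add: "tdeg ((a :: ('v::finite) mon) + b) = tdeg a + tdeg b"
  by (simp add: tdeg_sum lookup_add sum.distrib)



definition linord :: "('a \<Rightarrow> 'a \<Rightarrow> bool) \<Rightarrow> bool" where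
  "linord le \<longleftrightarrow> (\<forall>a. le a a) \<and> (\<forall>a b. le a b \<longrightarrow> le b a \<longrightarrow> a = b)
     \<and> (\<forall>a b c. le a b \<longrightarrow> le b c \<longrightarrow> le a c) \<and> (\<forall>a b. le a b \<or> le b a)"

lemma linord_refl: "linord le \<Longrightarrow> le a a" by (simp add: linord_def)
lemma linord_anti: "linord le \<Longrightarrow> le a b \<Longrightarrow> le b a \<Longrightarrow> a = b" by (simp add: linord_def)
lemma linord_trans: "linord le \<Longrightarrow> le a b \<Longrightarrow> le b c \<Longrightarrow> le a c"
  unfolding linord_def by meson
lemma linord_tot: "linord le \<Longrightarrow> le a b \<or> le b a" by (simp add: linord_def)

lemma max_exists:
  assumes "linord le" "finite A" "A \<noteq> {}"
  shows "\<exists>m\<in>A. \<forall>m'\<in>A. le m' m"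
  using assms(2,3)
proof (induction A rule: finite_ne_induct)
  case (singleton x) then show ?case using linord_refl[OF assms(1)] by blast
next
  case (insert x F)
  then obtain m where m: "m \<in> F" "\<forall>m'\<in>F. le m' m" by blast
  show ?case
  proof (cases "le x m")
    case True
    have "le m' m" if "m' \<in> insert x F" for m'
      using that True m(2) by (cases "m' = x") simp_all
    then show ?thesis using m(1) by blast
  next
    case False
    note tot = linord_tot[OF assms(1)] and refl = linord_refl[OF assms(1)]
      and trans = linord_trans[OF assms(1)]
    from tot[of x m] False have "le m x" by simp
    have "le m' x" if "m' \<in> insert x F" for m'
    proof (cases "m' = x")
      case True then show ?thesis using refl by simp
    next
      case False then have "m' \<in> F" using that by simp
      then have "le m' m" using m by blast
      then show ?thesis using \<open>le m x\<close> by (rule trans)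
    qed
    then show ?thesis by blast
  qed
qed

lemma lead_unique:
  assumes "linord le" "m \<in> Poly_Mapping.keys f" "\<forall>m'\<in>Poly_Mapping.keys f. le m' m"
  shows "lead_mon le f = m"
proof -
  note anti = linord_anti[OF assms(1)]
  show ?thesis unfolding lead_mon_def
  proof (rule the_equality)
    show "m \<in> Poly_Mapping.keys f \<and> (\<forall>m'\<in>Poly_Mapping.keys f. le m' m)" using assms by blast
    fix x assume "x \<in> Poly_Mapping.keys f \<and> (\<forall>m'\<in>Poly_Mapping.keys f. le m' x)"
    then have "le x m" "le m x" using assms by blast+
    then show "x = m" by (rule anti)
  qed
qed

lemma lead_props:
  assumes "linord le" "f \<noteq> 0"
  shows "lead_mon le f \<in> Poly_Mapping.keys f"
    "\<forall>m'\<in>Poly_Mapping.keys f. le m' (lead_mon le f)"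
proof -
  have "Poly_Mapping.keys f \<noteq> {}" using assms(2) by simp
  then obtain m where m: "m \<in> Poly_Mapping.keys f" "\<forall>m'\<in>Poly_Mapping.keys f. le m' m"
    using max_exists[OF assms(1) finite_keys] by blast
  then have "lead_mon le f = m" using lead_unique[OF assms(1)] by blast
  then show "lead_mon le f \<in> Poly_Mapping.keys f"
    "\<forall>m'\<in>Poly_Mapping.keys f. le m' (lead_mon le f)" using m by auto
qed

lemma dim_lead:
  fixes V :: "('v, 'k::field) mpoly set"
  assumes lin: "linord le" and fin: "finite M" and VM: "\<forall>f\<in>V. Poly_Mapping.keys f \<subseteq> M"
    and cl: "\<forall>f\<in>V. \<forall>h\<in>V. \<forall>c. f - kscale c h \<in> V"
  shows "K.dim V = card {lead_mon le f | f. f \<in> V \<and> f \<noteq> 0}"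
proof -
  note refl = linord_refl[OF lin] and anti = linord_anti[OF lin] and trans = linord_trans[OF lin]
  define L where "L = {lead_mon le f | f. f \<in> V \<and> f \<noteq> 0}"
  have "\<forall>m\<in>L. \<exists>f. f \<in> V \<and> f \<noteq> 0 \<and> lead_mon le f = m" unfolding L_def by blast
  then obtain b where b: "\<And>m. m \<in> L \<Longrightarrow> b m \<in> V \<and> b m \<noteq> 0 \<and> lead_mon le (b m) = m"
    by metis
  have LM: "L \<subseteq> M" unfolding L_def using VM lead_props(1)[OF lin] by fastforce
  then have finL: "finite L" using fin finite_subset by blast
  have injb: "inj_on b L" by (metis b inj_onI)
  define B where "B = b ` L"
  have BV: "B \<subseteq> V" unfolding B_def using b by blast
  have bB: "\<And>w. w \<in> B \<Longrightarrow> w = b (lead_mon le w) \<and> lead_mon le w \<in> L"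
    unfolding B_def using b by auto
  have indep: "K.independent B"
    unfolding K.independent_explicit_module
  proof (intro allI impI, rule ccontr)
    fix t u v
    assume t: "finite t" "t \<subseteq> B" "(\<Sum>v\<in>t. kscale (u v) v) = 0" "v \<in> t" "u v \<noteq> 0"
    define T where "T = {w\<in>t. u w \<noteq> 0}"
    have fT: "finite (lead_mon le ` T)" "lead_mon le ` T \<noteq> {}"
      using t unfolding T_def by auto
    obtain m where m: "m \<in> lead_mon le ` T" "\<forall>m'\<in>lead_mon le ` T. le m' m"
      using max_exists[OF lin fT] by blast
    then obtain w0 where w0: "w0 \<in> T" "lead_mon le w0 = m" by blast
    have w0B: "w0 \<in> B" using w0 t unfolding T_def by auto
    have w0nz: "w0 \<noteq> 0" using bB[OF w0B] b by metis
    have others: "u w * Poly_Mapping.lookup w m = 0" if "w \<in> t" "w \<noteq> w0" for w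
    proof (cases "u w = 0")
      case False
      then have wT: "w \<in> T" using that unfolding T_def by auto
      have wB: "w \<in> B" using that t by auto
      have le1: "le (lead_mon le w) m" using m wT by auto
      have ne: "lead_mon le w \<noteq> m" using bB[OF wB] bB[OF w0B] w0 that by metis
      have "m \<notin> Poly_Mapping.keys w"
      proof
        assume "m \<in> Poly_Mapping.keys w"
        moreover have "w \<noteq> 0" using bB[OF wB] b by metis
        ultimately have "le m (lead_mon le w)" using lead_props(2)[OF lin] by blast
        then show False using le1 ne anti by blast
      qed
      then show ?thesis by (simp add: in_keys_iff)
    qed simp
    have "0 = Poly_Mapping.lookup (\<Sum>v\<in>t. kscale (u v) v) m" using t by simp
    also have "\<dots> = (\<Sum>w\<in>t. u w * Poly_Mapping.lookup w m)" by (simp add: lookup_sum)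
    also have "\<dots> = u w0 * Poly_Mapping.lookup w0 m"
    proof -
      have w0t: "w0 \<in> t" using w0 unfolding T_def by auto
      have "(\<Sum>w\<in>t - {w0}. u w * Poly_Mapping.lookup w m) = 0"
        by (rule sum.neutral) (use others in auto)
      then show ?thesis using sum.remove[OF t(1) w0t, of "\<lambda>w. u w * Poly_Mapping.lookup w m"] by simp
    qed
    also have "\<dots> \<noteq> 0"
      using w0 lead_props(1)[OF lin w0nz] unfolding T_def by (simp add: in_keys_iff)
    finally show False by simp
  qed
  have span: "f \<in> K.span B" if "f \<in> V" for f
  proof -
    have "\<forall>f. f \<in> V \<longrightarrow> f \<noteq> 0 \<longrightarrow> card {x\<in>M. le x (lead_mon le f)} = n \<longrightarrow> f \<in> K.span B" for n
    proof (induction n rule: less_induct)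
      case (less n)
      show ?case
      proof (intro allI impI)
        fix f assume f: "f \<in> V" "f \<noteq> 0" "card {x\<in>M. le x (lead_mon le f)} = n"
        define m where "m = lead_mon le f"
        have mL: "m \<in> L" unfolding L_def m_def using f by blast
        have bm: "b m \<in> V" "b m \<noteq> 0" "lead_mon le (b m) = m" using b[OF mL] by auto
        have bmm: "Poly_Mapping.lookup (b m) m \<noteq> 0"
          using lead_props(1)[OF lin bm(2)] bm(3) by (simp add: in_keys_iff)
        define c where "c = Poly_Mapping.lookup f m / Poly_Mapping.lookup (b m) m"
        define f' where "f' = f - kscale c (b m)"
        have f'V: "f' \<in> V" unfolding f'_def using cl f bm by blast
        have f'm: "Poly_Mapping.lookup f' m = 0"
          unfolding f'_def c_def using bmm by (simp add: lookup_minus)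
        have bspan: "kscale c (b m) \<in> K.span B"
          using mL by (intro K.span_scale K.span_base) (simp add: B_def)
        show "f \<in> K.span B"
        proof (cases "f' = 0")
          case True
          then have "f = kscale c (b m)" unfolding f'_def by simp
          then show ?thesis using bspan by simp
        next
          case False
          have keysf': "Poly_Mapping.keys f' \<subseteq> Poly_Mapping.keys f \<union> Poly_Mapping.keys (b m)"
            unfolding f'_def by (auto simp: in_keys_iff lookup_minus)
          have below: "le x m" if "x \<in> Poly_Mapping.keys f'" for x
          proof -
            have "x \<in> Poly_Mapping.keys f \<or> x \<in> Poly_Mapping.keys (b m)" using keysf' that by blast
            then show ?thesis
              using lead_props(2)[OF lin f(2)] lead_props(2)[OF lin bm(2)] bm(3) m_def by auto
          qed
          define m' where "m' = lead_mon le f'"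
          have m'k: "m' \<in> Poly_Mapping.keys f'" unfolding m'_def using lead_props(1)[OF lin False] .
          have m'm: "le m' m" using below m'k by blast
          have m'ne: "m' \<noteq> m" using m'k f'm by (auto simp: in_keys_iff)
          have mM: "m \<in> M" using VM f lead_props(1)[OF lin f(2)] m_def by blast
          have sub: "{x\<in>M. le x m'} \<subset> {x\<in>M. le x m}"
          proof
            show "{x\<in>M. le x m'} \<subseteq> {x\<in>M. le x m}" using m'm trans by blast
            have "m \<in> {x\<in>M. le x m}" using mM refl by blast
            moreover have "m \<notin> {x\<in>M. le x m'}" using m'm m'ne anti by blast
            ultimately show "{x\<in>M. le x m'} \<noteq> {x\<in>M. le x m}" by blast
          qed
          have "card {x\<in>M. le x m'} < n"
            using psubset_card_mono[OF _ sub] fin f(3) m_def by auto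
          then have "f' \<in> K.span B" using less.IH f'V False m'_def by blast
          then have "f' + kscale c (b m) \<in> K.span B" using bspan by (rule K.span_add)
          then show "f \<in> K.span B" unfolding f'_def by simp
        qed
      qed
    qed
    then show ?thesis using that by (cases "f = 0") (auto simp: K.span_zero)
  qed
  have "card B = card L" unfolding B_def using card_image[OF injb] .
  then show ?thesis unfolding L_def[symmetric]
    using K.dim_unique[OF BV _ indep] span by blast
qed



definition compo :: "('v mon \<Rightarrow> 'p) \<Rightarrow> 'p \<Rightarrow> ('v,'k::zero) mpoly \<Rightarrow> ('v,'k) mpoly" where
  "compo deg E f = Abs_poly_mapping (\<lambda>m. if deg m = E then Poly_Mapping.lookup f m else 0)"

lemma lookup_compo:
  "Poly_Mapping.lookup (compo deg E f) m = (if deg m = E then Poly_Mapping.lookup f m else 0)"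
proof -
  have "finite {m. (if deg m = E then Poly_Mapping.lookup f m else 0) \<noteq> 0}"
    by (rule finite_subset[OF _ finite_keys[of f]]) (auto simp: in_keys_iff split: if_splits)
  then show ?thesis unfolding compo_def by simp
qed

lemma compo_add: "compo deg E (p + q) = compo deg E p + compo deg E q"
  by (rule poly_mapping_eqI) (simp add: lookup_compo lookup_add)

lemma compo_sum: "compo deg E (sum f A) = (\<Sum>a\<in>A. compo deg E (f a))"
  by (rule poly_mapping_eqI) (simp add: lookup_compo lookup_sum)

lemma compo_homog:
  assumes "\<forall>k\<in>Poly_Mapping.keys p. deg k = E'"
  shows "compo deg E p = (if E' = E then p else 0)"
  by (rule poly_mapping_eqI) (use assms in \<open>auto simp: lookup_compo in_keys_iff\<close>)

lemma keys_compo: "Poly_Mapping.keys (compo deg E p) \<subseteq> Poly_Mapping.keys p"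
  by (auto simp: in_keys_iff lookup_compo split: if_splits)

lemma keys_compo_deg: "k \<in> Poly_Mapping.keys (compo deg E p) \<Longrightarrow> deg k = E"
  by (auto simp: in_keys_iff lookup_compo split: if_splits)

lemma poly_expand:
  "c = (\<Sum>a\<in>Poly_Mapping.keys c. Poly_Mapping.single a (Poly_Mapping.lookup c a))"
proof (rule poly_mapping_eqI)
  fix k
  show "Poly_Mapping.lookup c k = Poly_Mapping.lookup
     (\<Sum>a\<in>Poly_Mapping.keys c. Poly_Mapping.single a (Poly_Mapping.lookup c a)) k"
    by (simp add: lookup_sum lookup_single when_def in_keys_iff)
qed

lemma keys_single_mult:
  "Poly_Mapping.keys (Poly_Mapping.single a x * (p::('v,'k::field) mpoly)) \<subseteq> {a + b | b. b \<in> Poly_Mapping.keys p}"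
  using keys_mult[of "Poly_Mapping.single a x" p]
  by (auto split: if_splits)

lemma compo_ideal:
  fixes S :: "('v, 'k::field) mpoly set"
  assumes grading: "P_grading deg" and hom: "\<forall>s\<in>S. P_homogeneous deg s"
    and p: "p \<in> ideal_gen S"
  shows "compo deg E p \<in> ideal_gen S"
  using p
proof (induction p rule: R.span_induct_alt)
  case base
  have "compo deg E 0 = (0::('v, 'k) mpoly)" by (rule poly_mapping_eqI) (simp add: lookup_compo)
  then show ?case by (simp add: R.span_zero)
next
  case (step c s y)
  obtain D where D: "\<forall>m\<in>Poly_Mapping.keys s. deg m = D" using hom step(1) unfolding P_homogeneous_def by blast
  have each: "compo deg E (Poly_Mapping.single a x * s) \<in> ideal_gen S" for a x
  proof -
    have "deg k = deg a + D" if kk: "k \<in> Poly_Mapping.keys (Poly_Mapping.single a x * s)" for k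
    proof -
      obtain b where b: "k = a + b" "b \<in> Poly_Mapping.keys s" using keys_single_mult[of a x s] kk by blast
      have "deg k = deg a + deg b" using grading b(1) unfolding P_grading_def by simp
      then show ?thesis using D b(2) by simp
    qed
    then have "\<forall>k\<in>Poly_Mapping.keys (Poly_Mapping.single a x * s). deg k = deg a + D" by blast
    then have "compo deg E (Poly_Mapping.single a x * s)
        = (if deg a + D = E then Poly_Mapping.single a x * s else 0)" by (rule compo_homog)
    then show ?thesis using step(1) by (simp add: R.span_zero R.span_scale R.span_base)
  qed
  have "c * s = (\<Sum>a\<in>Poly_Mapping.keys c. Poly_Mapping.single a (Poly_Mapping.lookup c a) * s)"
    by (subst poly_expand[of c]) (simp add: sum_distrib_right)
  then have "compo deg E (c * s) = (\<Sum>a\<in>Poly_Mapping.keys c. compo deg E (Poly_Mapping.single a (Poly_Mapping.lookup c a) * s))"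
    by (simp add: compo_sum)
  also have "\<dots> \<in> ideal_gen S" using each by (intro R.span_sum) auto
  finally show ?case using step(2) by (simp add: compo_add R.span_add)
qed

lemma keys_span:
  fixes T :: "('v, 'k::field) mpoly set"
  assumes "p \<in> ideal_gen T"
  shows "\<forall>x\<in>Poly_Mapping.keys p. \<exists>t\<in>T. \<exists>a y. y \<in> Poly_Mapping.keys t \<and> x = a + y"
  using assms
proof (induction p rule: R.span_induct_alt)
  case base then show ?case by simp
next
  case (step c s y)
  show ?case
  proof
    fix x assume "x \<in> Poly_Mapping.keys (c * s + y)"
    then have "x \<in> Poly_Mapping.keys (c * s) \<or> x \<in> Poly_Mapping.keys y"
      using keys_add[of "c * s" y] by blast
    then show "\<exists>t\<in>T. \<exists>a y. y \<in> Poly_Mapping.keys t \<and> x = a + y"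
    proof
      assume "x \<in> Poly_Mapping.keys (c * s)"
      then have "x \<in> {a + b |a b. a \<in> Poly_Mapping.keys c \<and> b \<in> Poly_Mapping.keys s}"
        using keys_mult[of c s] by (rule subsetD[rotated])
      then obtain a b where "x = a + b" "b \<in> Poly_Mapping.keys s" by blast
      then show ?thesis using step(1) by (intro bexI[of _ s]) auto
    next
      assume "x \<in> Poly_Mapping.keys y" then show ?thesis using step(2) by blast
    qed
  qed
qed



lemma mo_linord: "monomial_order le \<Longrightarrow> linord le"
  unfolding monomial_order_def linord_def by blast

lemma mo_add: "monomial_order le \<Longrightarrow> le a b \<Longrightarrow> le (c + a) (c + b)"
  unfolding monomial_order_def by (metis add.commute)

lemma linord_pull:
  assumes "linord le" "\<And>a b. tau a = tau b \<Longrightarrow> a = b"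
  shows "linord (\<lambda>a b. le (tau a) (tau b))"
  using assms unfolding linord_def by metis

lemma ideal_diff_scale:
  fixes I :: "('v, 'k::field) mpoly set"
  assumes "is_ideal I" "f \<in> I" "h \<in> I"
  shows "f - kscale c h \<in> I"
  using assms by (simp add: kscale_mult R.subspace_diff R.subspace_scale)

lemma piece_closed:
  fixes I :: "('v, 'k::field) mpoly set"
  assumes "is_ideal I"
  shows "\<forall>f\<in>piece deg I D. \<forall>h\<in>piece deg I D. \<forall>c. f - kscale c h \<in> piece deg I D"
proof (intro ballI allI)
  fix f h c assume f: "f \<in> piece deg I D" and h: "h \<in> piece deg I D"
  have "Poly_Mapping.keys (f - kscale c h) \<subseteq> Poly_Mapping.keys f \<union> Poly_Mapping.keys h"
    by (auto simp: in_keys_iff lookup_minus)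
  then show "f - kscale c h \<in> piece deg I D"
    using f h ideal_diff_scale[OF assms] unfolding piece_def by blast
qed

lemma piece_keys: "\<forall>f\<in>piece deg I D. Poly_Mapping.keys f \<subseteq> {m. deg m = D}"
  unfolding piece_def by blast


lemma main_le:
  fixes deg :: "('v::finite) mon \<Rightarrow> 'p::monoid_add"
    and G :: "('v \<Rightarrow> 'v) set"
    and le :: "'v mon \<Rightarrow> 'v mon \<Rightarrow> bool"
    and I :: "('v, 'k::field) mpoly set"
    and d :: nat
  assumes grading: "P_grading deg"
    and refines: "\<And>m m'. deg m = deg m' \<Longrightarrow> tdeg m = tdeg m'"
    and fin_pieces: "\<And>D. finite {m. deg m = D}"
    and order: "monomial_order le"
    and ideal: "is_ideal I"
    and homog: "\<exists>S. (\<forall>s\<in>S. P_homogeneous deg s) \<and> I = ideal_gen S"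
    and init_gen: "\<exists>S. (\<forall>s\<in>S. std_homogeneous_le d s) \<and> init_ideal le I = ideal_gen S"
    and monomial: "acts_monomially_upto G I d"
    and gG: "g \<in> G" and bij: "bij g"
    and ind: "induced_endo deg g \<phi>"
  shows "K.dim (piece deg I D) \<le> K.dim (piece deg I (\<phi> D))"
proof -
  define \<sigma> where "\<sigma> = act_mon g"
  define \<tau> where "\<tau> = act_mon (inv g)"
  have ts: "\<And>m. \<tau> (\<sigma> m) = m" unfolding \<sigma>_def \<tau>_def by (rule act_mon_inv_left[OF bij])
  have st: "\<And>m. \<sigma> (\<tau> m) = m" unfolding \<sigma>_def \<tau>_def by (rule act_mon_inv_right[OF bij])
  have sadd: "\<And>a b. \<sigma> (a + b) = \<sigma> a + \<sigma> b" unfolding \<sigma>_def by (rule act_mon_add[OF bij])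
  have tadd: "\<And>a b. \<tau> (a + b) = \<tau> a + \<tau> b"
    unfolding \<tau>_def by (rule act_mon_add) (use bij bij_imp_bij_inv in blast)
  have degs: "\<And>m. deg (\<sigma> m) = \<phi> (deg m)" using ind unfolding induced_endo_def \<sigma>_def by blast
  have degadd: "\<And>a b. deg (a + b) = deg a + deg b" using grading unfolding P_grading_def by blast
  define le' where "le' = (\<lambda>a b. le (\<tau> a) (\<tau> b))"
  have lin: "linord le" by (rule mo_linord[OF order])
  have lin': "linord le'" unfolding le'_def
    by (rule linord_pull[OF lin]) (metis st)
  define L where "L = {lead_mon le f | f. f \<in> piece deg I D \<and> f \<noteq> 0}"
  define L' where "L' = {lead_mon le' f | f. f \<in> piece deg I (\<phi> D) \<and> f \<noteq> 0}"
  have dimL: "K.dim (piece deg I D) = card L"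
    unfolding L_def by (rule dim_lead[OF lin fin_pieces piece_keys piece_closed[OF ideal]])
  have dimL': "K.dim (piece deg I (\<phi> D)) = card L'"
    unfolding L'_def by (rule dim_lead[OF lin' fin_pieces piece_keys piece_closed[OF ideal]])
  have finL': "finite L'"
  proof (rule finite_subset[OF _ fin_pieces[of "\<phi> D"]])
    show "L' \<subseteq> {m. deg m = \<phi> D}"
      unfolding L'_def piece_def using lead_props(1)[OF lin'] by fastforce
  qed
  obtain S where S: "\<forall>s\<in>S. P_homogeneous deg s" "I = ideal_gen S" using homog by blast
  obtain S' where S': "\<forall>s\<in>S'. std_homogeneous_le d s" "init_ideal le I = ideal_gen S'"
    using init_gen by blast
  have incl: "\<sigma> m \<in> L'" if mL: "m \<in> L" for m
  proof -
    obtain f where f: "f \<in> piece deg I D" "f \<noteq> 0" "m = lead_mon le f" using mL unfolding L_def by blast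
    have mk: "m \<in> Poly_Mapping.keys f" using lead_props(1)[OF lin f(2)] f(3) by simp
    have fI: "f \<in> I" using f(1) unfolding piece_def by blast
    have degm: "deg m = D" using f(1) mk unfolding piece_def by blast
    have "Poly_Mapping.single m 1 \<in> init_ideal le I"
      unfolding init_ideal_def using f fI by (intro R.span_base) blast
    then have "Poly_Mapping.single m (1::'k) \<in> ideal_gen S'" using S'(2) by simp
    from keys_span[OF this] obtain s a y where s: "s \<in> S'" "y \<in> Poly_Mapping.keys s" "m = a + y"
      by fastforce
    have "s \<in> init_ideal le I" using S'(2) s(1) by (simp add: R.span_base)
    from keys_span[OF this[unfolded init_ideal_def]] s(2) obtain t b y' where
      t: "t \<in> {Poly_Mapping.single (lead_mon le f) (1::'k) | f. f \<in> I \<and> f \<noteq> 0}"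
         "y' \<in> Poly_Mapping.keys t" "y = b + y'"
      by blast
    then obtain f1 where f1: "f1 \<in> I" "f1 \<noteq> 0" "t = Poly_Mapping.single (lead_mon le f1) 1" by blast
    define m0 where "m0 = lead_mon le f1"
    have y'm0: "y' = m0" using t(2) f1(3) m0_def by simp
    define c where "c = a + b"
    have mcm0: "m = c + m0" using s(3) t(3) y'm0 c_def by (simp add: add.assoc)
    have tdy: "tdeg y \<le> d"
    proof -
      obtain e where "e \<le> d" "\<forall>m\<in>Poly_Mapping.keys s. tdeg m = e"
        using S'(1) s(1) unfolding std_homogeneous_le_def by blast
      then show ?thesis using s(2) by simp
    qed
    have tdm0: "tdeg m0 \<le> d" using tdy t(3) y'm0 by (simp add: tdeg_add)
    define f0 where "f0 = compo deg (deg m0) f1"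
    have f0I: "f0 \<in> I" unfolding f0_def S(2) by (rule compo_ideal[OF grading S(1)]) (use f1 S in simp)
    have m0k1: "m0 \<in> Poly_Mapping.keys f1" using lead_props(1)[OF lin f1(2)] m0_def by simp
    have m0k: "m0 \<in> Poly_Mapping.keys f0"
      using m0k1 unfolding f0_def by (simp add: in_keys_iff lookup_compo)
    have f0nz: "f0 \<noteq> 0" using m0k by auto
    have f0below: "\<forall>k\<in>Poly_Mapping.keys f0. le k m0"
    proof
      fix k assume "k \<in> Poly_Mapping.keys f0"
      then have "k \<in> Poly_Mapping.keys f1" using keys_compo[of deg "deg m0" f1] unfolding f0_def by blast
      then show "le k m0" using lead_props(2)[OF lin f1(2)] unfolding m0_def by blast
    qed
    have f0deg: "\<And>k. k \<in> Poly_Mapping.keys f0 \<Longrightarrow> deg k = deg m0"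
      unfolding f0_def by (rule keys_compo_deg)
    have f0lead: "lead_mon le f0 = m0" by (rule lead_unique[OF lin m0k f0below])
    have "std_deg f0 \<le> d"
    proof -
      have "tdeg k \<le> d" if "k \<in> Poly_Mapping.keys f0" for k
        using refines[OF f0deg[OF that]] tdm0 by simp
      then have "\<forall>x\<in>insert 0 (tdeg ` Poly_Mapping.keys f0). x \<le> d" by auto
      then show ?thesis unfolding std_deg_def by (simp add: Max_le_iff)
    qed
    note mono = monomial[unfolded acts_monomially_upto_def, rule_format, OF f0I this gG]
    then obtain h' where h': "h' \<in> I" "Poly_Mapping.keys h' = Poly_Mapping.keys (act_poly g f0)"
      by blast
    have kh': "Poly_Mapping.keys h' = \<sigma> ` Poly_Mapping.keys f0"
      using h'(2) keys_act_poly[OF bij] \<sigma>_def by simp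
    define p where "p = Poly_Mapping.single (\<sigma> c) (1::'k) * h'"
    have pI: "p \<in> I" unfolding p_def using ideal h'(1) by (rule R.subspace_scale)
    have sm: "\<sigma> m = \<sigma> c + \<sigma> m0" using mcm0 sadd by simp
    have smk: "\<sigma> m \<in> Poly_Mapping.keys p"
    proof -
      have "\<sigma> m0 \<in> Poly_Mapping.keys h'" using kh' m0k by simp
      then show ?thesis unfolding p_def sm by (simp add: in_keys_iff lookup_single_mult)
    qed
    have pkeys: "\<exists>k0. k0 \<in> Poly_Mapping.keys f0 \<and> k = \<sigma> c + \<sigma> k0" if kp: "k \<in> Poly_Mapping.keys p" for k
    proof -
      obtain b' where "k = \<sigma> c + b'" "b' \<in> Poly_Mapping.keys h'"
        using keys_single_mult[of "\<sigma> c" 1 h'] kp unfolding p_def by blast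
      moreover then obtain k0 where "k0 \<in> Poly_Mapping.keys f0" "b' = \<sigma> k0" using kh' by blast
      ultimately show ?thesis by blast
    qed
    have pbelow: "\<forall>k\<in>Poly_Mapping.keys p. le' k (\<sigma> m)"
    proof
      fix k assume "k \<in> Poly_Mapping.keys p"
      then obtain k0 where k0: "k0 \<in> Poly_Mapping.keys f0" "k = \<sigma> c + \<sigma> k0" using pkeys by blast
      have "le (c + k0) (c + m0)" using mo_add[OF order] f0below k0(1) by blast
      then show "le' k (\<sigma> m)" unfolding le'_def k0(2) sm tadd ts by simp
    qed
    have pdeg: "\<forall>k\<in>Poly_Mapping.keys p. deg k = \<phi> D"
    proof
      fix k assume "k \<in> Poly_Mapping.keys p"
      then obtain k0 where k0: "k0 \<in> Poly_Mapping.keys f0" "k = \<sigma> c + \<sigma> k0" using pkeys by blast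
      have "deg k = \<phi> (deg (c + k0))" unfolding k0(2) sadd[symmetric] degs ..
      also have "deg (c + k0) = deg m" unfolding mcm0 degadd f0deg[OF k0(1)] ..
      finally show "deg k = \<phi> D" using degm by simp
    qed
    have pnz: "p \<noteq> 0" using smk by auto
    have "lead_mon le' p = \<sigma> m" by (rule lead_unique[OF lin' smk pbelow])
    moreover have "p \<in> piece deg I (\<phi> D)" unfolding piece_def using pI pdeg by blast
    ultimately have "\<sigma> m = lead_mon le' p \<and> p \<in> piece deg I (\<phi> D) \<and> p \<noteq> 0" using pnz by simp
    then show ?thesis unfolding L'_def by blast
  qed
  have "card L = card (\<sigma> ` L)"
    by (rule card_image[symmetric]) (metis inj_onI ts)
  also have "\<dots> \<le> card L'" using incl finL' by (intro card_mono) auto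
  finally show ?thesis using dimL dimL' by simp
qed



lemma dim_empty_piece:
  fixes I :: "('v, 'k::field) mpoly set"
  assumes "\<not> (\<exists>m. deg m = E)"
  shows "K.dim (piece deg I E) = 0"
proof -
  have "piece deg I E \<subseteq> K.span {}"
  proof
    fix f assume "f \<in> piece deg I E"
    then have "Poly_Mapping.keys f = {}" using assms unfolding piece_def by blast
    then show "f \<in> K.span {}" by simp
  qed
  then have "K.dim (piece deg I E) \<le> card ({} :: ('v, 'k) mpoly set)"
    by (rule K.dim_le_card) simp
  then show ?thesis by simp
qed

theorem mainTheorem13:
  fixes deg :: "('v::finite) mon \<Rightarrow> 'p::monoid_add"
    and G :: "('v \<Rightarrow> 'v) set"
    and le :: "'v mon \<Rightarrow> 'v mon \<Rightarrow> bool"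
    and I :: "('v, 'k::field) mpoly set"
    and d :: nat
  assumes grading: "P_grading deg"
    and refines: "\<And>m m'. deg m = deg m' \<Longrightarrow> tdeg m = tdeg m'"
    and fin_pieces: "\<And>D. finite {m. deg m = D}"
    and group: "perm_group G"
    and order: "monomial_order le"
    and ideal: "is_ideal I"
    and homog: "\<exists>S. (\<forall>s\<in>S. P_homogeneous deg s) \<and> I = ideal_gen S"
    and init_gen: "\<exists>S. (\<forall>s\<in>S. std_homogeneous_le d s) \<and> init_ideal le I = ideal_gen S"
    and monomial: "acts_monomially_upto G I d"
    and compatible: "P_compatible deg G"
  shows "\<forall>g\<in>G. \<forall>\<phi>. induced_endo deg g \<phi> \<longrightarrow>
           ps_act \<phi> (hilbert_series deg I) = hilbert_series deg I"
proof (intro ballI allI impI)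
  fix g \<phi> assume gG: "g \<in> G" and ind: "induced_endo deg g \<phi>"
  define F where "F = hilbert_series deg I"
  have leF: "F D \<le> F (\<psi> D)" if "h \<in> G" "induced_endo deg h \<psi>" for h \<psi> D
  proof -
    have "bij h" using group that(1) unfolding perm_group_def by blast
    then show ?thesis unfolding F_def hilbert_series_def
      using main_le[OF grading refines fin_pieces order ideal homog init_gen monomial that(1) _ that(2)]
      by blast
  qed
  have bij: "bij g" using group gG unfolding perm_group_def by blast
  have igG: "inv g \<in> G" using group gG unfolding perm_group_def by blast
  obtain \<psi> where psi: "induced_endo deg (inv g) \<psi>" using compatible igG unfolding P_compatible_def by blast
  have degs: "\<And>m. deg (act_mon g m) = \<phi> (deg m)" using ind unfolding induced_endo_def by blast
  have degt: "\<And>m. deg (act_mon (inv g) m) = \<psi> (deg m)" using psi unfolding induced_endo_def by blast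
  have psiphi: "\<psi> (\<phi> (deg m)) = deg m" for m
    using degs[of m] degt[of "act_mon g m"] act_mon_inv_left[OF bij, of m] by simp
  have phipsi: "\<phi> (\<psi> (deg m)) = deg m" for m
    using degt[of m] degs[of "act_mon (inv g) m"] act_mon_inv_right[OF bij, of m] by simp
  have Feq: "F (\<phi> (deg m)) = F (deg m)" for m
    using leF[OF gG ind, of "deg m"] leF[OF igG psi, of "\<phi> (deg m)"] psiphi[of m] by simp
  have Fnz: "\<exists>m. deg m = E" if "F E \<noteq> 0" for E
  proof (rule ccontr)
    assume "\<not> (\<exists>m. deg m = E)"
    then have "K.dim (piece deg I E) = 0" by (rule dim_empty_piece)
    then show False using that unfolding F_def hilbert_series_def by simp
  qed
  show "ps_act \<phi> F = F"
  proof
    fix E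
    show "ps_act \<phi> F E = F E"
    proof (cases "F E = 0")
      case True
      have emp: "{D. F D \<noteq> 0 \<and> \<phi> D = E} = {}"
      proof (rule ccontr)
        assume "{D. F D \<noteq> 0 \<and> \<phi> D = E} \<noteq> {}"
        then obtain D where D: "F D \<noteq> 0" "\<phi> D = E" by blast
        then obtain m where m: "deg m = D" using Fnz by blast
        then show False using Feq[of m] D True by simp
      qed
      show ?thesis unfolding ps_act_def emp using True by simp
    next
      case False
      then obtain m' where m': "deg m' = E" using Fnz by blast
      define D0 where "D0 = \<psi> E"
      have D0: "D0 = deg (act_mon (inv g) m')" unfolding D0_def using degt m' by simp
      have phiD0: "\<phi> D0 = E" unfolding D0_def using phipsi m' by blast
      have FD0: "F D0 = F E" using Feq[of "act_mon (inv g) m'"] D0 phiD0 by simp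
      have single: "{D. F D \<noteq> 0 \<and> \<phi> D = E} = {D0}"
      proof
        show "{D0} \<subseteq> {D. F D \<noteq> 0 \<and> \<phi> D = E}" using FD0 False phiD0 by simp
        show "{D. F D \<noteq> 0 \<and> \<phi> D = E} \<subseteq> {D0}"
        proof
          fix D assume "D \<in> {D. F D \<noteq> 0 \<and> \<phi> D = E}"
          then have D: "F D \<noteq> 0" "\<phi> D = E" by auto
          then obtain m where m: "deg m = D" using Fnz by blast
          have "D0 = \<psi> (\<phi> D)" unfolding D0_def using D by simp
          also have "\<dots> = D" using psiphi m by blast
          finally show "D \<in> {D0}" by simp
        qed
      qed
      show ?thesis unfolding ps_act_def single using FD0 by simp
    qed
  qed
qed

end
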